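(* Let $m\ge 0$ and $n \ge 2m$ be integers. Then for every real $r$ with $|r|>1$, $$\int_{-1}^1 \frac{T_n(s)(1-s^2)^{m-\frac{1}{2}}}{s-r}\,ds = \pi(-1)^{m+1}\frac{|r|}{r}(r^2-1)^{m-\frac{1}{2}}\left(r-\frac{|r|}{r}\sqrt{r^2-1}\right)^n.$$
   Context: $T_k(s)=\cos(k\cos^{-1}s)$ is the Tchebyshev polynomial of the first kind. Since $|r|>1$, the integrand has no singularity in the interior of $(-1,1)$ and the integral is an ordinary (improper at $\pm1$ when $m=0$) integral. *)

theory Defs
  imports "HOL-Analysis.Analysis"
begin

definition cheb_T :: "nat \<Rightarrow> real \<Rightarrow> real" where
  "cheb_T k s = cos (real k * arccos s)"

end

theory Submission
  imports Defs
begin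

lemma cheb_rec:
  assumes "-1 \<le> s" "s \<le> 1"
  shows "cheb_T (k+2) s + cheb_T k s = 2 * s * cheb_T (k+1) s"
proof -
  define a where "a = arccos s"
  have ca: "cos a = s" using assms by (simp add: a_def cos_arccos)
  have e1: "real (k+2) * a = real (k+1) * a + a" by (simp add: algebra_simps)
  have e2: "real k * a = real (k+1) * a - a" by (simp add: algebra_simps)
  show ?thesis unfolding cheb_T_def a_def[symmetric] e1
    by (subst e2) (simp add: cos_add cos_diff ca)
qed

lemma cheb_T0: "cheb_T 0 s = 1" by (simp add: cheb_T_def)
lemma cheb_T1: "-1 \<le> s \<Longrightarrow> s \<le> 1 \<Longrightarrow> cheb_T 1 s = s" by (simp add: cheb_T_def cos_arccos)
lemma cheb_T1': "-1 \<le> s \<Longrightarrow> s \<le> 1 \<Longrightarrow> cheb_T (Suc 0) s = s" by (simp add: cheb_T_def cos_arccos)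

lemma powr_mhalf: "(x::real) \<ge> 0 \<Longrightarrow> x powr (-1/2) = inverse (sqrt x)"
proof -
  assume "x \<ge> 0"
  have "x powr (-1/2) = x powr (-(1/2))" by simp
  also have "\<dots> = inverse (sqrt x)" using \<open>x \<ge> 0\<close> by (simp only: powr_minus powr_half_sqrt)
  finally show ?thesis .
qed

lemma powr_mhalf': "(x::real) \<ge> 0 \<Longrightarrow> x powr - (1/2) = inverse (sqrt x)"
  using powr_mhalf by simp

lemma int_cheb_w:
  "((\<lambda>s. cheb_T k s * (1 - s\<^sup>2) powr (-1/2)) has_integral (if k = 0 then pi else 0)) {-1..1}"
proof (cases "k = 0")
  case True
  have "((\<lambda>s. cheb_T k s * (1 - s\<^sup>2) powr (-1/2)) has_integral ((- arccos 1) - (- arccos (-1)))) {-1..1}"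
  proof (rule fundamental_theorem_of_calculus_interior)
    show "continuous_on {-1..1} (\<lambda>s::real. - arccos s)"
      by (intro continuous_intros) auto
    fix x :: real assume x: "x \<in> {-1<..<1}"
    have "1 - x\<^sup>2 > 0" using x by (simp add: abs_square_less_1 abs_less_iff)
    then have "((\<lambda>s. - arccos s) has_real_derivative (cheb_T k x * (1 - x\<^sup>2) powr (-1/2))) (at x)"
      using DERIV_arccos[of x] x True by (auto intro!: derivative_eq_intros simp: cheb_T0 powr_mhalf')
    then show "((\<lambda>s. - arccos s) has_vector_derivative (cheb_T k x * (1 - x\<^sup>2) powr (-1/2))) (at x)"
      by (simp add: has_real_derivative_iff_has_vector_derivative)
  qed simp
  then show ?thesis using True by simp
next
  case False
  have "((\<lambda>s. cheb_T k s * (1 - s\<^sup>2) powr (-1/2)) has_integral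
      ((- sin (real k * arccos 1) / real k) - (- sin (real k * arccos (-1)) / real k))) {-1..1}"
  proof (rule fundamental_theorem_of_calculus_interior)
    show "continuous_on {-1..1} (\<lambda>s::real. - sin (real k * arccos s) / real k)"
      by (intro continuous_intros) (use False in auto)
    fix x :: real assume x: "x \<in> {-1<..<1}"
    have "1 - x\<^sup>2 > 0" using x by (simp add: abs_square_less_1 abs_less_iff)
    then have "((\<lambda>s. - sin (real k * arccos s) / real k) has_real_derivative (cheb_T k x * (1 - x\<^sup>2) powr (-1/2))) (at x)"
      using DERIV_arccos[of x] x False by (auto intro!: derivative_eq_intros simp: cheb_T_def powr_mhalf')
    then show "((\<lambda>s. - sin (real k * arccos s) / real k) has_vector_derivative (cheb_T k x * (1 - x\<^sup>2) powr (-1/2))) (at x)"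
      by (simp add: has_real_derivative_iff_has_vector_derivative)
  qed simp
  moreover have "sin (real k * pi) = 0" by (simp add: sin_npi)  
  ultimately show ?thesis using False by simp
qed

lemma aux_div: "(d::real) \<noteq> 0 \<Longrightarrow> S \<noteq> 0 \<Longrightarrow> - (1 * d) / (S * d\<^sup>2) = inverse S / (- d)"
  by (simp add: power2_eq_square field_simps)

lemma int_K0:
  fixes r :: real
  assumes r: "\<bar>r\<bar> > 1"
  shows "((\<lambda>s. (1 - s\<^sup>2) powr (-1/2) / (s - r)) has_integral
           (- pi * (\<bar>r\<bar>/r) / sqrt (r\<^sup>2 - 1))) {-1..1}"
proof -
  define \<sigma> where "\<sigma> = \<bar>r\<bar>/r"
  define q where "q = sqrt (r\<^sup>2 - 1)"
  define u where "u = (\<lambda>s. (1 - r * s)/(r - s))"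
  have "1 < \<bar>r\<bar> * \<bar>r\<bar>" using r less_1_mult by blast
  then have r2: "r\<^sup>2 > 1" by (simp add: power2_eq_square)
  have q: "q > 0" unfolding q_def using r2 by simp
  have qq: "q\<^sup>2 = r\<^sup>2 - 1" unfolding q_def using r2 by simp
  have rs: "r - s \<noteq> 0" if "s \<in> {-1..1}" for s using that r by auto
  have sig: "\<sigma> * (r - s) = \<bar>r - s\<bar>" if "s \<in> {-1..1}" for s
    using that r unfolding \<sigma>_def by (cases "r > 0") auto
  have key: "(r - s)\<^sup>2 - (1 - r * s)\<^sup>2 = (r\<^sup>2 - 1) * (1 - s\<^sup>2)" for s
    by (simp add: power2_eq_square algebra_simps)
  have ule: "-1 \<le> u s \<and> u s \<le> 1" if s: "s \<in> {-1..1}" for s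
  proof -
    have "s\<^sup>2 \<le> 1" using s by (simp add: abs_square_le_1 abs_le_iff)
    then have "(1 - r * s)\<^sup>2 \<le> (r - s)\<^sup>2" using key[of s] r2 by (smt (verit) mult_nonneg_nonneg)
    then have "\<bar>1 - r * s\<bar> \<le> \<bar>r - s\<bar>" by (simp add: abs_le_square_iff)
    then have "\<bar>u s\<bar> \<le> 1" unfolding u_def using rs[OF s] by (simp add: abs_divide divide_le_eq_1)
    then show ?thesis by (simp add: abs_le_iff)
  qed
  have "((\<lambda>s. (1 - s\<^sup>2) powr (-1/2) / (s - r)) has_integral
           (\<sigma> / q * arcsin (u 1) - \<sigma> / q * arcsin (u (-1)))) {-1..1}"
  proof (rule fundamental_theorem_of_calculus_interior)
    show "continuous_on {-1..1} (\<lambda>s. \<sigma> / q * arcsin (u s))"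
      unfolding u_def using ule unfolding u_def by (intro continuous_intros) (auto dest: rs)
    fix x :: real assume x: "x \<in> {-1<..<1}"
    then have xx: "x \<in> {-1..1}" by auto
    have x2: "1 - x\<^sup>2 > 0" using x by (simp add: abs_square_less_1 abs_less_iff)
    have sx: "sqrt (1 - x\<^sup>2) > 0" using x2 by simp
    have "(1 - r * x)\<^sup>2 < (r - x)\<^sup>2" using key[of x] r2 x2 by (smt (verit) mult_pos_pos)
    then have "\<bar>1 - r * x\<bar> < \<bar>r - x\<bar>" by (metis abs_ge_zero power2_abs power2_less_imp_less) 
    then have "\<bar>u x\<bar> < 1" unfolding u_def using rs[OF xx] by (simp add: abs_divide)
    then have ux: "-1 < u x" "u x < 1" by (auto simp: abs_less_iff)
    have du: "(u has_real_derivative ((1 - r\<^sup>2)/(r - x)\<^sup>2)) (at x)"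
      unfolding u_def using rs[OF xx]
      by (auto intro!: derivative_eq_intros simp: field_simps power2_eq_square)
    have su: "sqrt (1 - (u x)\<^sup>2) = q * sqrt (1 - x\<^sup>2) / \<bar>r - x\<bar>"
    proof -
      have "1 - (u x)\<^sup>2 = (q * sqrt (1 - x\<^sup>2) / \<bar>r - x\<bar>)\<^sup>2"
        unfolding u_def using rs[OF xx] x2 key[of x]
        by (simp add: power_divide power_mult_distrib qq field_simps)
      then show ?thesis using q sx by simp
    qed
    have "((\<lambda>s. \<sigma> / q * arcsin (u s)) has_real_derivative
           (\<sigma> / q * (inverse (sqrt (1 - (u x)\<^sup>2)) * ((1 - r\<^sup>2)/(r - x)\<^sup>2)))) (at x)"
      by (intro DERIV_cmult DERIV_chain2[OF DERIV_arcsin[OF ux] du])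
    moreover have "\<sigma> / q * (inverse (sqrt (1 - (u x)\<^sup>2)) * ((1 - r\<^sup>2)/(r - x)\<^sup>2))
        = (1 - x\<^sup>2) powr (-1/2) / (x - r)"
    proof -
      have "\<sigma> / q * (inverse (sqrt (1 - (u x)\<^sup>2)) * ((1 - r\<^sup>2)/(r - x)\<^sup>2))
          = - (\<sigma> * \<bar>r - x\<bar>) * (q\<^sup>2 / (q * q)) / (sqrt (1 - x\<^sup>2) * (r - x)\<^sup>2)"
        unfolding su using q sx rs[OF xx] by (simp add: qq field_simps)
      also have "\<dots> = - (\<sigma> * \<sigma> * (r - x)) / (sqrt (1 - x\<^sup>2) * (r - x)\<^sup>2)"
        using q by (simp add: sig[OF xx, symmetric] power2_eq_square mult.assoc)
      also have "\<sigma> * \<sigma> = 1" unfolding \<sigma>_def using r by (cases "r > 0") auto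
      also have "- (1 * (r - x)) / (sqrt (1 - x\<^sup>2) * (r - x)\<^sup>2) = inverse (sqrt (1 - x\<^sup>2)) / (x - r)"
      proof -
        have a: "r - x \<noteq> 0" using rs[OF xx] .
        have b: "sqrt (1 - x\<^sup>2) \<noteq> 0" using sx by simp
        have c: "- (1 * (r - x)) / (sqrt (1 - x\<^sup>2) * (r - x)\<^sup>2) = inverse (sqrt (1 - x\<^sup>2)) / (- (r - x))"
          using aux_div[OF a b] .
        show ?thesis using c by (simp add: minus_diff_eq)
      qed
      finally show ?thesis using x2 by (simp add: powr_mhalf')
    qed
    ultimately show "((\<lambda>s. \<sigma> / q * arcsin (u s)) has_vector_derivative ((1 - x\<^sup>2) powr (-1/2) / (x - r))) (at x)"
      by (simp add: has_real_derivative_iff_has_vector_derivative)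
  qed simp
  moreover have "u 1 = -1" "u (-1) = 1" unfolding u_def using rs[of 1] rs[of "-1"] by (auto simp: field_simps)
  ultimately show ?thesis by (simp add: \<sigma>_def q_def)
qed

lemma rho_facts:
  fixes r :: real
  assumes r: "\<bar>r\<bar> > 1"
  defines "\<rho> \<equiv> r - (\<bar>r\<bar>/r) * sqrt (r\<^sup>2 - 1)"
  defines "C \<equiv> - pi * (\<bar>r\<bar>/r) / sqrt (r\<^sup>2 - 1)"
  shows "\<rho>\<^sup>2 = 2 * r * \<rho> - 1" "C * (\<rho> - r) = pi"
proof -
  have "1 < \<bar>r\<bar> * \<bar>r\<bar>" using r less_1_mult by blast
  then have r2: "r\<^sup>2 > 1" by (simp add: power2_eq_square)
  have ss: "(\<bar>r\<bar>/r) * (\<bar>r\<bar>/r) = 1" using r by (cases "r > 0") auto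
  have qq: "(sqrt (r\<^sup>2 - 1))\<^sup>2 = r\<^sup>2 - 1" using r2 by simp
  have q: "sqrt (r\<^sup>2 - 1) > 0" using r2 by simp
  show "\<rho>\<^sup>2 = 2 * r * \<rho> - 1"
  proof -
    have g: "(r - a * b)\<^sup>2 = 2 * r * (r - a * b) - 1" if "a * a = 1" "b\<^sup>2 = r\<^sup>2 - 1" for a b :: real
    proof -
      have "(r - a * b)\<^sup>2 = r\<^sup>2 - 2 * r * (a * b) + (a * a) * b\<^sup>2" by (simp add: power2_eq_square algebra_simps)
      also have "\<dots> = 2 * r * (r - a * b) - 1" unfolding that by (simp add: power2_eq_square algebra_simps)
      finally show ?thesis .
    qed
    show ?thesis unfolding \<rho>_def by (rule g[OF ss qq])
  qed
  show "C * (\<rho> - r) = pi"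
  proof -
    have "C * (\<rho> - r) = pi * ((\<bar>r\<bar>/r) * (\<bar>r\<bar>/r)) * (sqrt (r\<^sup>2 - 1) / sqrt (r\<^sup>2 - 1))"
      unfolding C_def \<rho>_def by (simp add: algebra_simps)
    then show ?thesis using ss q by simp
  qed
qed

lemma hi_trans:
  assumes "(g has_integral v) S" "\<And>x. x \<in> S \<Longrightarrow> g x = f x" "v = w"
  shows "(f has_integral w) S"
  using assms has_integral_cong by metis

lemma int_K:
  fixes r :: real
  assumes r: "\<bar>r\<bar> > 1"
  shows "((\<lambda>s. cheb_T n s * (1 - s\<^sup>2) powr (-1/2) / (s - r)) has_integral
           ((- pi * (\<bar>r\<bar>/r) / sqrt (r\<^sup>2 - 1)) * (r - (\<bar>r\<bar>/r) * sqrt (r\<^sup>2 - 1)) ^ n)) {-1..1}"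
proof -
  define \<rho> where "\<rho> = r - (\<bar>r\<bar>/r) * sqrt (r\<^sup>2 - 1)"
  define C where "C = - pi * (\<bar>r\<bar>/r) / sqrt (r\<^sup>2 - 1)"
  have rho2: "\<rho>\<^sup>2 = 2 * r * \<rho> - 1" unfolding \<rho>_def by (rule rho_facts(1)[OF r])
  have Crho: "C * (\<rho> - r) = pi" unfolding \<rho>_def C_def by (rule rho_facts(2)[OF r])
  define p where "p = (\<lambda>s::real. (1 - s\<^sup>2) powr (-1/2))"
  define f where "f = (\<lambda>n s. cheb_T n s * p s / (s - r))"
  have rs: "s - r \<noteq> 0" if "s \<in> {-1..1}" for s using that r by auto
  have W: "((\<lambda>s. cheb_T k s * p s) has_integral (if k = 0 then pi else 0)) {-1..1}" for k
    unfolding p_def by (rule int_cheb_w)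
  have K0: "(f 0 has_integral C) {-1..1}"
  proof (rule hi_trans[OF int_K0[OF r]])
    show "(1 - x\<^sup>2) powr (-1/2) / (x - r) = f 0 x" for x unfolding f_def p_def cheb_T0 by simp
  qed (simp add: C_def)
  have K1: "(f 1 has_integral C * \<rho>) {-1..1}"
  proof (rule hi_trans[OF has_integral_add[OF W[of 0] has_integral_mult_right[OF K0, of r]]])
    fix s :: real assume s: "s \<in> {-1..1}"
    have "cheb_T 1 s = s" using s cheb_T1 by auto
    moreover have "1 * P + r * (1 * P / (s - r)) = s * P / (s - r)" for P
      using rs[OF s] by (simp add: field_simps)
    ultimately show "cheb_T 0 s * p s + r * f 0 s = f 1 s" unfolding f_def cheb_T0 by simp
  next
    show "(if 0 = (0::nat) then pi else 0) + r * C = C * \<rho>" using Crho by (simp add: algebra_simps)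
  qed
  have step: "(f (k+2) has_integral C * \<rho> ^ (k+2)) {-1..1}"
    if A: "(f k has_integral C * \<rho> ^ k) {-1..1}" and B: "(f (k+1) has_integral C * \<rho> ^ (k+1)) {-1..1}" for k
  proof (rule hi_trans[OF has_integral_add[OF has_integral_diff[OF has_integral_mult_right[OF B, of "2*r"] A]
              has_integral_mult_right[OF W[of "k+1"], of 2]]])
    fix s :: real assume s: "s \<in> {-1..1}"
    have e: "cheb_T (k+2) s = 2 * s * cheb_T (k+1) s - cheb_T k s"
      using cheb_rec[of s k] s by auto
    have g: "2 * r * (T1 * P / (s - r)) - T0 * P / (s - r) + 2 * (T1 * P) = (2 * s * T1 - T0) * P / (s - r)" for T0 T1 P
      using rs[OF s] by (simp add: divide_simps) (simp add: algebra_simps)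
    show "2 * r * f (k+1) s - f k s + 2 * (cheb_T (k+1) s * p s) = f (k+2) s"
      unfolding f_def e by (rule g)
  next
    have "C * \<rho> ^ (k+2) = C * \<rho> ^ k * \<rho>\<^sup>2" by (simp add: power_add power2_eq_square)
    also have "\<dots> = C * \<rho> ^ k * (2 * r * \<rho> - 1)" by (simp only: rho2)
    finally show "2 * r * (C * \<rho> ^ (k+1)) - C * \<rho> ^ k + 2 * (if k + 1 = 0 then pi else 0) = C * \<rho> ^ (k+2)"
      by (simp add: algebra_simps)
  qed
  have "(f n has_integral C * \<rho> ^ n) {-1..1} \<and> (f (n+1) has_integral C * \<rho> ^ (n+1)) {-1..1}"
  proof (induction n)
    case 0 show ?case using K0 K1 by simp
  next
    case (Suc n)
    then have "(f (n+2) has_integral C * \<rho> ^ (n+2)) {-1..1}" using step[of n] by blast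
    then show ?case using Suc by (simp add: numeral_2_eq_2)
  qed
  then have "(f n has_integral C * \<rho> ^ n) {-1..1}" by blast
  then show ?thesis by (simp only: f_def C_def \<rho>_def p_def)
qed

lemma cheb_sq:
  assumes "-1 \<le> s" "s \<le> 1"
  shows "(1 - s\<^sup>2) * cheb_T (k+2) s = cheb_T (k+2) s / 2 - cheb_T (k+4) s / 4 - cheb_T k s / 4"
proof -
  define T0 T1 T2 T3 T4 where "T0 = cheb_T k s" "T1 = cheb_T (k+1) s" "T2 = cheb_T (k+2) s"
    "T3 = cheb_T (k+3) s" "T4 = cheb_T (k+4) s"
  have a: "T2 + T0 = 2 * s * T1" unfolding T0_T1_T2_T3_T4_def using cheb_rec[OF assms, of k] by simp
  have b: "T3 + T1 = 2 * s * T2" unfolding T0_T1_T2_T3_T4_def using cheb_rec[OF assms, of "k+1"]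
    by (simp add: add.assoc numeral_3_eq_3 numeral_2_eq_2)
  have c: "T4 + T2 = 2 * s * T3" unfolding T0_T1_T2_T3_T4_def using cheb_rec[OF assms, of "k+2"]
    by (simp add: add.assoc numeral_3_eq_3 numeral_2_eq_2 eval_nat_numeral)
  have "(1 - s\<^sup>2) * T2 = T2 / 2 - T4 / 4 - T0 / 4" using a b c by algebra
  then show ?thesis unfolding T0_T1_T2_T3_T4_def .
qed

lemma powr_step:
  assumes "-1 \<le> s" "s \<le> 1"
  shows "(1 - s\<^sup>2) powr (real (Suc m) - 1/2) = (1 - s\<^sup>2) * (1 - s\<^sup>2) powr (real m - 1/2)"
proof (cases "1 - s\<^sup>2 = 0")
  case True then show ?thesis by simp
next
  case False
  have "real (Suc m) - 1/2 = 1 + (real m - 1/2)" by simp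
  moreover have "1 - s\<^sup>2 \<ge> 0" using assms by (simp add: abs_square_le_1 abs_le_iff)
  ultimately show ?thesis using False by (simp only: powr_add powr_one_gt_zero_iff) (simp add: powr_add)
qed

lemma int_I:
  fixes r :: real
  assumes r: "\<bar>r\<bar> > 1"
  shows "n \<ge> 2 * m \<Longrightarrow> ((\<lambda>s. cheb_T n s * (1 - s\<^sup>2) powr (real m - 1/2) / (s - r)) has_integral
           ((- pi * (\<bar>r\<bar>/r) / sqrt (r\<^sup>2 - 1)) * (-1)^m * (r\<^sup>2 - 1)^m * (r - (\<bar>r\<bar>/r) * sqrt (r\<^sup>2 - 1)) ^ n)) {-1..1}"
proof (induction m arbitrary: n)
  case 0 then show ?case using int_K[OF r, of n] by simp
next
  case (Suc m)
  define \<rho> where "\<rho> = r - (\<bar>r\<bar>/r) * sqrt (r\<^sup>2 - 1)"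
  define C where "C = - pi * (\<bar>r\<bar>/r) / sqrt (r\<^sup>2 - 1)"
  define E where "E = C * (-1)^m * (r\<^sup>2 - 1)^m"
  have rho2: "\<rho>\<^sup>2 = 2 * r * \<rho> - 1" unfolding \<rho>_def by (rule rho_facts(1)[OF r])
  define f where "f = (\<lambda>n s. cheb_T n s * (1 - s\<^sup>2) powr (real m - 1/2) / (s - r))"
  define k where "k = n - 2"
  have k: "n = k + 2" "k \<ge> 2 * m" using Suc.prems unfolding k_def by auto
  have IH: "(f j has_integral E * \<rho> ^ j) {-1..1}" if "j \<ge> 2 * m" for j
    using Suc.IH[OF that] unfolding f_def C_def \<rho>_def E_def .
  have I1: "(f (k+2) has_integral E * \<rho> ^ (k+2)) {-1..1}" by (rule IH) (use k in simp)
  have I2: "(f (k+4) has_integral E * \<rho> ^ (k+4)) {-1..1}" by (rule IH) (use k in simp)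
  have I3: "(f k has_integral E * \<rho> ^ k) {-1..1}" by (rule IH) (use k in simp)
  have "((\<lambda>s. cheb_T n s * (1 - s\<^sup>2) powr (real (Suc m) - 1/2) / (s - r)) has_integral
      E * (-(r\<^sup>2 - 1)) * \<rho> ^ n) {-1..1}"
  proof (rule hi_trans[OF has_integral_diff[OF has_integral_diff[OF has_integral_divide[OF I1, of 2]
          has_integral_divide[OF I2, of 4]] has_integral_divide[OF I3, of 4]]])
    fix s :: real assume s: "s \<in> {-1..1}"
    have g: "A * W / d / 2 - B * W / d / 4 - D * W / d / 4 = (A/2 - B/4 - D/4) * W / d" for A B D W d :: real
      by (simp add: divide_simps) (simp add: algebra_simps)
    have c: "cheb_T (k+2) s / 2 - cheb_T (k+4) s / 4 - cheb_T k s / 4 = (1 - s\<^sup>2) * cheb_T (k+2) s"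
      using cheb_sq[of s k] s by simp
    show "f (k+2) s / 2 - f (k+4) s / 4 - f k s / 4 =
      cheb_T n s * (1 - s\<^sup>2) powr (real (Suc m) - 1/2) / (s - r)"
      unfolding f_def g c k(1) using powr_step[of s m] s by (simp add: mult_ac)
  next
    have e: "\<rho>\<^sup>2 / 2 - \<rho>\<^sup>2 * \<rho>\<^sup>2 / 4 - 1/4 = - (r\<^sup>2 - 1) * \<rho>\<^sup>2"
      using rho2 by algebra
    have "E * \<rho> ^ (k+2) / 2 - E * \<rho> ^ (k+4) / 4 - E * \<rho> ^ k / 4
        = E * \<rho> ^ k * (\<rho>\<^sup>2 / 2 - \<rho>\<^sup>2 * \<rho>\<^sup>2 / 4 - 1/4)"
      by (simp add: power_add algebra_simps power2_eq_square power4_eq_xxxx)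
    also have "\<dots> = E * (-(r\<^sup>2 - 1)) * \<rho> ^ n"
      unfolding e k(1) by (simp add: power_add algebra_simps power2_eq_square)
    finally show "E * \<rho> ^ (k+2) / 2 - E * \<rho> ^ (k+4) / 4 - E * \<rho> ^ k / 4 = E * (-(r\<^sup>2 - 1)) * \<rho> ^ n" .
  qed
  moreover have "E * (-(r\<^sup>2 - 1)) = C * (-1)^(Suc m) * (r\<^sup>2 - 1)^(Suc m)"
    unfolding E_def by (simp add: algebra_simps)
  ultimately show ?case unfolding C_def \<rho>_def by simp
qed

theorem mainTheorem9:
  fixes m n :: nat and r :: real
  assumes "n \<ge> 2 * m" and "\<bar>r\<bar> > 1"
  shows "((\<lambda>s. cheb_T n s * (1 - s\<^sup>2) powr (real m - 1/2) / (s - r)) has_integral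
          (pi * (-1) ^ (m + 1) * (\<bar>r\<bar> / r) * (r\<^sup>2 - 1) powr (real m - 1/2)
             * (r - (\<bar>r\<bar> / r) * sqrt (r\<^sup>2 - 1)) ^ n)) {-1..1}"
proof -
  have "1 < \<bar>r\<bar> * \<bar>r\<bar>" using assms(2) less_1_mult by blast
  then have r2: "r\<^sup>2 - 1 > 0" by (simp add: power2_eq_square)
  have pw: "(r\<^sup>2 - 1) powr (real m - 1/2) = (r\<^sup>2 - 1)^m / sqrt (r\<^sup>2 - 1)"
    using r2 by (simp add: powr_diff powr_realpow powr_half_sqrt)
  have "(- pi * (\<bar>r\<bar>/r) / sqrt (r\<^sup>2 - 1)) * (-1)^m * (r\<^sup>2 - 1)^m
      = pi * (-1) ^ (m + 1) * (\<bar>r\<bar> / r) * (r\<^sup>2 - 1) powr (real m - 1/2)"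
    unfolding pw by simp
  then show ?thesis using int_I[OF assms(2) assms(1)] by simp
qed

end
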